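(* For every $p\in(1/2,1)$ and every $V\in\{G,B\}$ there exists $\underline{\epsilon}>0$ (depending on $V$ and $p$) such that $\mathbb{P}_{Y\text{-cas}}(\epsilon)<\mathbb{P}_{Y\text{-cas}}(0)$ for all $\epsilon\in(0,\underline{\epsilon})$.
   Context: Observational learning model: an item has true value $V\in\{G,B\}$; agents arrive sequentially, each receives a private binary signal equal to the "correct" signal with probability $p\in(1/2,1)$, and each agent is independently fake with probability $\epsilon\in[0,1)$ (a fake agent's recorded action is always $Y$ = buy). Define $a=p+(1-p)\epsilon$, $b=p(1-\epsilon)$, $\alpha=p/(1-p)$ and $\eta=\eta(\epsilon)=\log\big(a/(1-b)\big)/\log\alpha\in(0,1]$. Given $V$, let $p_f=a$ if $V=G$ and $p_f=1-b$ if $V=B$. Before any cascade, the agents' sufficient statistic $h$ evolves as the following random walk: $h_0=0$ and, independently at each step, $h$ increases by $\eta$ with probability $p_f$ (an observed $Y$) or decreases by $1$ with probability $1-p_f$ (an observed $N$); the walk is stopped the first time it leaves $[-1,1]$. Leaving above $1$ is a $Y$ cascade, leaving below $-1$ is an $N$ cascade. $\mathbb{P}_{Y\text{-cas}}(\epsilon)$ denotes the probability (given $V$) that the walk leaves $[-1,1]$ above $1$. (For $\epsilon=0$ one has $\eta=1$, so $\mathbb{P}_{Y\text{-cas}}(0)$ is the probability that the $\pm1$ walk from $0$ reaches $2$ before $-2$.) *)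

theory Defs
  imports Complex_Main
begin

datatype item_value = G | B

definition a_par :: "real \<Rightarrow> real \<Rightarrow> real" where
  "a_par p \<epsilon> = p + (1 - p) * \<epsilon>"

definition b_par :: "real \<Rightarrow> real \<Rightarrow> real" where
  "b_par p \<epsilon> = p * (1 - \<epsilon>)"

definition alpha_par :: "real \<Rightarrow> real" where
  "alpha_par p = p / (1 - p)"

definition eta :: "real \<Rightarrow> real \<Rightarrow> real" where
  "eta p \<epsilon> = ln (a_par p \<epsilon> / (1 - b_par p \<epsilon>)) / ln (alpha_par p)"

definition p_f :: "real \<Rightarrow> real \<Rightarrow> item_value \<Rightarrow> real" where
  "p_f p \<epsilon> V = (case V of G \<Rightarrow> a_par p \<epsilon> | B \<Rightarrow> 1 - b_par p \<epsilon>)"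

text \<open>ycas_within q e n h: probability that the walk started at h, stepping +e with
  probability q and -1 with probability 1-q, stopped at the first exit from [-1,1],
  has exited above 1 within at most n steps.\<close>
fun ycas_within :: "real \<Rightarrow> real \<Rightarrow> nat \<Rightarrow> real \<Rightarrow> real" where
  "ycas_within q e 0 h = (if h > 1 then 1 else 0)"
| "ycas_within q e (Suc n) h =
     (if h > 1 then 1 else if h < -1 then 0
      else q * ycas_within q e n (h + e) + (1 - q) * ycas_within q e n (h - 1))"

text \<open>Probability (given V) of a Y cascade: the walk from 0 ever leaves [-1,1] above 1.
  The event is the increasing union over n of exiting above within n steps.\<close>
definition P_Ycas :: "real \<Rightarrow> item_value \<Rightarrow> real \<Rightarrow> real" where
  "P_Ycas p V \<epsilon> = (SUP n. ycas_within (p_f p \<epsilon> V) (eta p \<epsilon>) n 0)"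

end

theory Submission imports Defs begin

definition yv :: "real \<Rightarrow> real" where "yv q = q / (1 - q + q*q)"
definition zv :: "real \<Rightarrow> real" where "zv q = q * yv q + (1-q)*(q*q*yv q)"

definition Ub :: "real \<Rightarrow> real \<Rightarrow> real" where
 "Ub q h = (if h > 1 then 1 else if h < -1 then 0 else if h = 1 then q + (1-q)*zv q
    else if h = 0 then zv q else if h = -1 then q*q*yv q else if h > 0 then yv q else q * yv q)"

lemma yv_bnd: assumes "0<q" "q<1" shows "0 < yv q" "yv q \<le> 1"
proof -
  have d: "1 - q + q*q > 0" using assms zero_le_square[of q] by linarith
  show "0 < yv q" using d assms by (simp add: yv_def)
  have "0 \<le> (1-q)*(1-q)" by simp
  then have "q \<le> 1 - q + q*q" by (simp add: algebra_simps)
  then show "yv q \<le> 1" using d by (simp add: yv_def)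
qed

lemma zv_bnd: assumes "0<q" "q<1" shows "0 \<le> zv q" "zv q \<le> yv q"
proof -
  note y = yv_bnd[OF assms]
  show "0 \<le> zv q" unfolding zv_def using y assms by (intro add_nonneg_nonneg mult_nonneg_nonneg) auto
  have "q*q \<le> 1" using assms by (simp add: mult_le_one)
  then have "(1-q)*(q*q) \<le> (1-q)*1" using assms by (intro mult_left_mono) auto
  then have "q + (1-q)*(q*q) \<le> 1" by simp
  then have "(q + (1-q)*(q*q)) * yv q \<le> 1 * yv q" using y by (intro mult_right_mono) auto
  then show "zv q \<le> yv q" unfolding zv_def by (simp add: algebra_simps)
qed

lemma Ub_bnd: assumes "0<q" "q<1" shows "0 \<le> Ub q h" "Ub q h \<le> 1"
  "-1 < h \<Longrightarrow> h < 1 \<Longrightarrow> Ub q h \<le> yv q"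
proof -
  note y = yv_bnd[OF assms] and z = zv_bnd[OF assms]
  have a: "q*yv q \<le> yv q" "0 \<le> q*yv q" using y assms by (auto simp: mult_left_le_one_le)
  have qq: "q*q \<le> 1" using assms by (intro mult_le_one) auto
  have b: "q*q*yv q \<le> yv q" "0 \<le> q*q*yv q" using y assms qq
    by (auto intro: mult_left_le_one_le)
  have "(1-q)*zv q \<le> 1 - q" using mult_left_mono[of "zv q" 1 "1-q"] z y assms by simp
  moreover have "0 \<le> (1-q)*zv q" using z assms by simp
  ultimately have c: "q + (1-q)*zv q \<le> 1 \<and> 0 \<le> q + (1-q)*zv q" using assms by linarith
  have e: "q * yv q \<le> 1" "q*q*yv q \<le> 1" using a b y by linarith+
  show "0 \<le> Ub q h" unfolding Ub_def using a b c y z by auto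
  show "Ub q h \<le> 1" unfolding Ub_def using c y z e by simp
  show "-1 < h \<Longrightarrow> h < 1 \<Longrightarrow> Ub q h \<le> yv q" unfolding Ub_def using a b c y z by auto
qed

lemma super: assumes "0<q" "q<1" "0<e" "e<1" "-1 \<le> h" "h \<le> 1"
  shows "q * Ub q (h+e) + (1-q) * Ub q (h-1) \<le> Ub q h"
proof -
  note U = Ub_bnd[OF assms(1,2)]
  have d: "1 - q + q*q > 0" using assms zero_le_square[of q] by linarith
  have yx: "yv q = q + (1-q) * (q * yv q)" using d
    unfolding yv_def by (simp add: field_simps)
  consider "h = 1" | "h = 0" | "h = -1" | "0 < h \<and> h < 1" | "-1 < h \<and> h < 0"
    using assms by linarith
  then show ?thesis
  proof cases
    case 1
    then show ?thesis using assms by (simp add: Ub_def)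
  next
    case 2
    then show ?thesis using assms by (simp add: Ub_def zv_def)
  next
    case 3
    then show ?thesis using assms by (simp add: Ub_def)
  next
    case 4
    have "Ub q (h-1) = q * yv q" using 4 by (simp add: Ub_def)
    moreover have "Ub q (h+e) \<le> 1" by (rule U(2))
    moreover have "Ub q h = yv q" using 4 by (simp add: Ub_def)
    moreover have "q * Ub q (h+e) \<le> q * 1" using assms U(2) by (intro mult_left_mono) auto
    ultimately have "(1-q)*Ub q (h-1) = (1-q)*(q*yv q)" by simp
    then show ?thesis using yx \<open>q * Ub q (h+e) \<le> q * 1\<close> \<open>Ub q h = yv q\<close> by linarith
  next
    case 5
    have "Ub q (h-1) = 0" using 5 by (simp add: Ub_def)
    moreover have "Ub q (h+e) \<le> yv q" using 5 assms by (intro U(3)) auto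
    moreover have "Ub q h = q * yv q" using 5 by (simp add: Ub_def)
    ultimately show ?thesis using assms by (simp add: mult_left_mono)
  qed
qed

lemma ycas_le: assumes "0<q" "q<1" "0<e" "e<1"
  shows "ycas_within q e n h \<le> Ub q h"
proof (induction n arbitrary: h)
  case 0
  show ?case
  proof (cases "h > 1")
    case True then show ?thesis by (simp add: Ub_def)
  next
    case False then show ?thesis using Ub_bnd(1)[OF assms(1,2), of h] by simp
  qed
next
  case (Suc n)
  show ?case
  proof (cases "h > 1 \<or> h < -1")
    case True
    then show ?thesis by (auto simp: Ub_def)
  next
    case False
    have "ycas_within q e (Suc n) h = q * ycas_within q e n (h + e) + (1 - q) * ycas_within q e n (h - 1)"
      using False by simp
    also have "\<dots> \<le> q * Ub q (h+e) + (1-q) * Ub q (h-1)"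
      using Suc assms by (intro add_mono mult_left_mono) auto
    also have "\<dots> \<le> Ub q h" using super[OF assms] False by auto
    finally show ?thesis .
  qed
qed

lemma ycas_le1: assumes "0\<le>q" "q\<le>1" shows "ycas_within q e n h \<le> 1"
proof (induction n arbitrary: h)
  case (Suc n)
  then show ?case using assms
    by (auto intro!: convex_bound_le)
qed simp

lemma ycas6: "ycas_within q 1 6 0 = q *
     (q +
      (1 - q) * (q * (q + (1 - q) * (q * q)) + (1 - q) * (q * (q * q)))) +
     (1 - q) *
     (q * (q * (q + (1 - q) * (q * q)) + (1 - q) * (q * (q * q))))"
  by (simp add: numeral_eq_Suc)

lemma key_ineq: assumes "0<q" "q<1"
  shows "zv q < ycas_within q 1 6 0"
proof -
  define t where "t = q*(1-q)"
  have h: "(q-1/2)*(q-1/2) = q*q - q + 1/4" by algebra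
  have te: "t = q - q*q" unfolding t_def by algebra
  have t1: "0 < t" unfolding t_def using assms by simp
  have t2: "t \<le> 1/4" using h te zero_le_square[of "q-1/2"] by linarith
  note t = t1 t2
  have d: "1 - q + q*q = 1 - t" unfolding t_def by (simp add: algebra_simps)
  have nz: "1 - t \<noteq> 0" using t by simp
  have e1: "zv q = (q + (1-q)*(q*q)) * yv q" unfolding zv_def by algebra
  have e2: "q + (1-q)*(q*q) = q*(1+t)" unfolding t_def by algebra
  have e3: "yv q = q/(1-t)" unfolding yv_def d ..
  have zq: "zv q = q*q*(1+t)/(1-t)" unfolding e1 e2 e3 by simp
  have y6: "ycas_within q 1 6 0 = q*q*(1+2*t+4*t*t)" unfolding ycas6 t_def
    by (simp add: algebra_simps)
  have "(1+t)/(1-t) < 1+2*t+4*t*t"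
  proof -
    have "0 < t*t*(2-4*t)" using t by (intro mult_pos_pos) auto
    moreover have "(1+2*t+4*t*t)*(1-t) = 1+t+t*t*(2-4*t)" by algebra
    ultimately have "1+t < (1+2*t+4*t*t)*(1-t)" by linarith
    then show ?thesis using t by (simp add: divide_simps)
  qed
  moreover have "0 < q*q" using assms by simp
  ultimately have "q*q*((1+t)/(1-t)) < q*q*(1+2*t+4*t*t)" by (rule mult_strict_left_mono)
  then show ?thesis using zq y6 by simp
qed

lemma eta_bnd: assumes "1/2 < p" "p < 1" "0 < e" "e < 1"
  shows "0 < eta p e" "eta p e < 1"
proof -
  have pa: "0 < 1 - p" using assms by simp
  have den: "0 < 1 - b_par p e" unfolding b_par_def using assms
    using mult_left_mono[of "1-e" 1 p] by linarith
  have "0 \<le> (1-p)*e" using pa assms by simp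
  then have num: "0 < a_par p e" unfolding a_par_def using assms by linarith
  have "1 - b_par p e < a_par p e"
  proof -
    have "(2*p-1)*e < (2*p-1)*1" using assms by (intro mult_strict_left_mono) auto
    then show ?thesis unfolding a_par_def b_par_def by (simp add: algebra_simps)
  qed
  then have r1: "1 < a_par p e / (1 - b_par p e)" using den by simp
  have "(1-p)*(1-p)*e < p*p*e"
  proof -
    have "(1-p)*(1-p) < p*p" using mult_strict_mono[of "1-p" p "1-p" p] assms by simp
    then show ?thesis using assms by simp
  qed
  then have "a_par p e * (1-p) < p * (1 - b_par p e)"
    unfolding a_par_def b_par_def by (simp add: algebra_simps)
  then have r2: "a_par p e / (1 - b_par p e) < alpha_par p" unfolding alpha_par_def
    using den pa by (simp add: divide_simps mult.commute)
  have l1: "0 < ln (a_par p e / (1 - b_par p e))" using r1 by simp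
  have l2: "ln (a_par p e / (1 - b_par p e)) < ln (alpha_par p)" using r1 r2 by simp
  show "0 < eta p e" unfolding eta_def using l1 l2 by simp
  show "eta p e < 1" unfolding eta_def using l1 l2 by simp
qed

lemma eta0: assumes "1/2 < p" "p < 1" shows "eta p 0 = 1"
proof -
  have "1 < alpha_par p" unfolding alpha_par_def using assms by simp
  then have "ln (alpha_par p) \<noteq> 0" by simp
  then show ?thesis unfolding eta_def a_par_def b_par_def alpha_par_def by simp
qed

lemma q_bnd: assumes "1/2 < p" "p < 1" "0 \<le> e" "e < 1"
  shows "0 < p_f p e V" "p_f p e V < 1"
proof -
  have "(1-p)*e < (1-p)*1" "p*e < p*1" using assms by (intro mult_strict_left_mono, auto)+
  moreover have "0 \<le> (1-p)*e" "0 \<le> p*e" using assms by auto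
  ultimately show "0 < p_f p e V" "p_f p e V < 1"
    unfolding p_f_def a_par_def b_par_def by (cases V; simp add: algebra_simps)+
qed

lemma q_cont: "((\<lambda>e. p_f p e V) \<longlongrightarrow> p_f p 0 V) (at 0)"
  unfolding p_f_def a_par_def b_par_def
  by (cases V) (simp_all, (rule tendsto_eq_intros refl | simp)+)

lemma zv_cont: assumes "0 < q" "q < 1" shows "isCont zv q"
proof -
  have "1 - q + q*q > 0" using assms zero_le_square[of q] by linarith
  then show ?thesis unfolding zv_def[abs_def] yv_def by (intro continuous_intros) auto
qed

theorem theorem2:
  fixes p :: real and V :: item_value
  assumes "1/2 < p" and "p < 1"
  shows "\<exists>\<epsilon>0 > 0. \<forall>\<epsilon>. 0 < \<epsilon> \<and> \<epsilon> < \<epsilon>0 \<longrightarrow> P_Ycas p V \<epsilon> < P_Ycas p V 0"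
proof -
  define q0 where "q0 = p_f p 0 V"
  have q0: "0 < q0" "q0 < 1" unfolding q0_def using q_bnd assms by auto
  define L where "L = ycas_within q0 1 6 0"
  have "L \<le> P_Ycas p V 0"
    unfolding P_Ycas_def L_def q0_def eta0[OF assms]
  proof (rule cSUP_upper)
    show "bdd_above (range (\<lambda>n. ycas_within (p_f p 0 V) 1 n 0))"
      using ycas_le1[of "p_f p 0 V"] q_bnd[OF assms, of 0 V]
      by (intro bdd_aboveI2[where M=1]) auto
  qed auto
  define g where "g = (\<lambda>e. zv (p_f p e V))"
  have "(g \<longlongrightarrow> g 0) (at 0)"
    unfolding g_def using isCont_tendsto_compose[OF zv_cont[OF q0[unfolded q0_def]] q_cont] .
  moreover have "g 0 < L" unfolding g_def L_def q0_def[symmetric] by (rule key_ineq[OF q0])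
  ultimately have "eventually (\<lambda>e. g e < L) (at 0)" by (rule order_tendstoD(2))
  then obtain d where d: "d > 0" "\<And>x. x \<noteq> 0 \<Longrightarrow> dist x 0 < d \<Longrightarrow> g x < L"
    unfolding eventually_at by blast
  show ?thesis
  proof (intro exI[of _ "min d 1"] conjI allI impI)
    show "0 < min d 1" using d by simp
    fix e :: real assume e: "0 < e \<and> e < min d 1"
    have et: "0 < eta p e" "eta p e < 1" using eta_bnd assms e by auto
    have qe: "0 < p_f p e V" "p_f p e V < 1" using q_bnd assms e by auto
    have "P_Ycas p V e \<le> g e" unfolding P_Ycas_def g_def
      by (rule cSUP_least) (auto intro: ycas_le[OF qe et, of _ 0, simplified Ub_def, simplified])
    also have "g e < L" using d e by auto
    also have "L \<le> P_Ycas p V 0" by fact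
    finally show "P_Ycas p V e < P_Ycas p V 0" .
  qed
qed

end
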